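(* Let $C\subseteq(\mathbb{R}^d,\operatorname{dist})$ be the attractor of an iterated function system of finitely many maps $f_i(x)=\lambda_i x+t_i$ with $\lambda_i\in(0,1)$ and $t_i\in\mathbb{R}^d$, such that $f_i(B[0,1])\subseteq B[0,1]$ for all $i$. For a word $I=i_1\cdots i_k$ let $S_I:=f_{i_1}\circ\cdots\circ f_{i_k}(B[0,1])$ (so $S_\emptyset=B[0,1]$, $S_i=B[t_i,\lambda_i]$). Then: (1) if $S_\emptyset\setminus\bigcup_i S_i\neq\emptyset$, \[h_\emptyset\le\max_{x\in S_\emptyset\setminus\bigcup_iS_i}\ \min_i\frac{\operatorname{dist}(x,t_i)-\lambda_i}{1-\lambda_i};\] (2) $\tau(C,\{S_I\}_I)\ge\frac{\min_j\lambda_j}{h_\emptyset}$; (3) the system $\{S_I\}_I$ is $(2\max_i\lambda_i+h_\emptyset)$-uniformly dense.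
   Context: $\mathbb{R}^d$ carries a distance $\operatorname{dist}$ induced by a norm; $B[x,\rho]$ is the closed ball of center $x$ and radius $\rho$. A system of balls for a compact set $C$ is a family $\{S_I\}_I$ of closed balls indexed by finite words with each $S_I$ containing its finitely many children $S_{I,j}$, $C=\bigcap_{n\ge0}\bigcup_{\ell(I)=n}S_I$, and radii tending to $0$ along every infinite branch. $h_I:=\max_{x\in S_I}\operatorname{dist}(x,C)$; thickness $\tau(C,\{S_I\}_I):=\inf_I\frac{\min_i\operatorname{rad}(S_{I,i})}{h_I}$. The system is $r$-uniformly dense if for every $I$ and every ball $B\subseteq S_I$ with $\operatorname{rad}(B)\ge r\operatorname{rad}(S_I)$ there is a child $S_{I,i}\subseteq B$. *)

theory Defs
  imports "HOL-Analysis.Analysis"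
begin

text \<open>Ambient space: a finite-dimensional real normed space, i.e. R^d with a distance
induced by an arbitrary norm (class heine_borel forces finite dimension).
Words over the finite alphabet A are lists I with set I \<subseteq> A; the children of I are
I @ [i] for i in A. Balls of a system are given as sets S I together with radii rad I.\<close>

definition ifs_map :: "('i \<Rightarrow> real) \<Rightarrow> ('i \<Rightarrow> 'a::real_normed_vector) \<Rightarrow> 'i \<Rightarrow> 'a \<Rightarrow> 'a" where
  "ifs_map lam t i x = lam i *\<^sub>R x + t i"

definition word_map :: "('i \<Rightarrow> real) \<Rightarrow> ('i \<Rightarrow> 'a::real_normed_vector) \<Rightarrow> 'i list \<Rightarrow> 'a \<Rightarrow> 'a" where
  "word_map lam t I = foldr (\<lambda>i g. ifs_map lam t i \<circ> g) I id"

definition ifs_ball :: "('i \<Rightarrow> real) \<Rightarrow> ('i \<Rightarrow> 'a::real_normed_vector) \<Rightarrow> 'i list \<Rightarrow> 'a set" where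
  "ifs_ball lam t I = word_map lam t I ` cball 0 1"

definition ifs_rad :: "('i \<Rightarrow> real) \<Rightarrow> 'i list \<Rightarrow> real" where
  "ifs_rad lam I = prod_list (map lam I)"

definition is_attractor :: "'i set \<Rightarrow> ('i \<Rightarrow> 'a::metric_space \<Rightarrow> 'a) \<Rightarrow> 'a set \<Rightarrow> bool" where
  "is_attractor A f C \<longleftrightarrow> compact C \<and> C \<noteq> {} \<and> C = (\<Union>i\<in>A. f i ` C)"

definition hgap :: "'a::metric_space set \<Rightarrow> 'a set \<Rightarrow> real" where
  "hgap C S = (SUP x\<in>S. infdist x C)"

text \<open>Thickness, valued in extended reals (a ratio with h_I = 0 counts as +infinity).\<close>
definition thickness :: "'i set \<Rightarrow> ('i list \<Rightarrow> 'a::metric_space set) \<Rightarrow> ('i list \<Rightarrow> real) \<Rightarrow> 'a set \<Rightarrow> ereal" where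
  "thickness A S rad C =
     (INF I\<in>{I. set I \<subseteq> A}. ereal (Min ((\<lambda>i. rad (I @ [i])) ` A)) / ereal (hgap C (S I)))"

definition uniformly_dense :: "'i set \<Rightarrow> ('i list \<Rightarrow> 'a::metric_space set) \<Rightarrow> ('i list \<Rightarrow> real) \<Rightarrow> real \<Rightarrow> bool" where
  "uniformly_dense A S rad r \<longleftrightarrow>
     (\<forall>I. set I \<subseteq> A \<longrightarrow> (\<forall>y \<rho>. cball y \<rho> \<subseteq> S I \<and> \<rho> \<ge> r * rad I \<longrightarrow>
        (\<exists>i\<in>A. S (I @ [i]) \<subseteq> cball y \<rho>)))"

end

theory Submission
  imports Defs
begin

lemma wm_Cons: "word_map lam t (i#I) = ifs_map lam t i \<circ> word_map lam t I"
  by (simp add: word_map_def)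

lemma wm_Nil: "word_map lam t [] = id"
  by (simp add: word_map_def)

lemma foldr_comp_gen: "foldr (\<lambda>i g. F i \<circ> g) I z = foldr (\<lambda>i g. F i \<circ> g) I id \<circ> z"
  by (induction I) (auto simp: comp_assoc)

lemma wm_snoc: "word_map lam t (I @ [i]) = word_map lam t I \<circ> ifs_map lam t i"
  unfolding word_map_def by (simp, subst foldr_comp_gen, simp)

lemma wm_affine: "word_map lam t I x = ifs_rad lam I *\<^sub>R x + word_map lam t I 0"
  by (induction I) (auto simp: word_map_def ifs_rad_def ifs_map_def algebra_simps)

lemma wm_dist: "dist (word_map lam t I x) (word_map lam t I y) = \<bar>ifs_rad lam I\<bar> * dist x y"
proof -
  have "dist (word_map lam t I x) (word_map lam t I y) = norm (ifs_rad lam I *\<^sub>R (x - y))"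
    by (subst wm_affine, subst (2) wm_affine) (simp add: dist_norm algebra_simps)
  thus ?thesis by (simp add: dist_norm)
qed

lemma rad_pos: "\<forall>i\<in>A. 0 < lam i \<Longrightarrow> set I \<subseteq> A \<Longrightarrow> 0 < ifs_rad lam I"
  by (induction I) (auto simp: ifs_rad_def)

lemma wm_C:
  assumes "is_attractor A (ifs_map lam t) C" "set I \<subseteq> A" "c \<in> C"
  shows "word_map lam t I c \<in> C"
  using assms(2,3)
proof (induction I)
  case Nil thus ?case by (simp add: wm_Nil)
next
  case (Cons i I)
  hence "word_map lam t I c \<in> C" "i \<in> A" by auto
  hence "ifs_map lam t i (word_map lam t I c) \<in> (\<Union>i\<in>A. ifs_map lam t i ` C)" by blast
  thus ?case using assms(1) unfolding is_attractor_def by (simp add: wm_Cons)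
qed

lemma h_upper:
  fixes C :: "'a::real_normed_vector set"
  assumes "C \<noteq> {}" "y \<in> cball 0 1"
  shows "infdist y C \<le> hgap C (cball 0 1)"
proof -
  obtain c0 where c0: "c0 \<in> C" using assms by blast
  have "\<forall>x\<in>cball 0 1. infdist x C \<le> 1 + norm c0"
  proof
    fix x :: 'a assume "x \<in> cball 0 1"
    hence "norm x \<le> 1" by simp
    have "infdist x C \<le> dist x c0" by (rule infdist_le[OF c0])
    also have "\<dots> \<le> norm x + norm c0" by (simp add: dist_norm norm_triangle_ineq4)
    finally show "infdist x C \<le> 1 + norm c0" using \<open>norm x \<le> 1\<close> by linarith
  qed
  hence "bdd_above ((\<lambda>x. infdist x C) ` cball 0 1)" by (auto intro: bdd_aboveI2)
  thus ?thesis unfolding hgap_def using assms(2) by (rule cSUP_upper2) simp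
qed

theorem lemma4p1:
  fixes A :: "'i set" and lam :: "'i \<Rightarrow> real"
    and t :: "'i \<Rightarrow> 'a::{real_normed_vector, heine_borel}" and C :: "'a set"
  assumes "finite A" and "A \<noteq> {}"
    and "\<forall>i\<in>A. 0 < lam i \<and> lam i < 1"
    and "\<forall>i\<in>A. ifs_map lam t i ` cball 0 1 \<subseteq> cball 0 1"
    and "is_attractor A (ifs_map lam t) C"
  shows "(ifs_ball lam t [] - (\<Union>i\<in>A. ifs_ball lam t [i]) \<noteq> {} \<longrightarrow>
           hgap C (ifs_ball lam t []) \<le>
             (SUP x\<in>ifs_ball lam t [] - (\<Union>i\<in>A. ifs_ball lam t [i]).
                Min ((\<lambda>i. (dist x (t i) - lam i) / (1 - lam i)) ` A)))
       \<and> thickness A (ifs_ball lam t) (ifs_rad lam) C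
           \<ge> ereal (Min (lam ` A)) / ereal (hgap C (ifs_ball lam t []))
       \<and> uniformly_dense A (ifs_ball lam t) (ifs_rad lam)
           (2 * Max (lam ` A) + hgap C (ifs_ball lam t []))"
proof -
  note fA = assms(1) and neA = assms(2) and lamA = assms(3) and att = assms(5)
  have Cc: "compact C" and Cne: "C \<noteq> {}" and Ceq: "C = (\<Union>i\<in>A. ifs_map lam t i ` C)"
    using att unfolding is_attractor_def by auto
  have S0: "ifs_ball lam t [] = cball 0 1" by (simp add: ifs_ball_def wm_Nil)
  have Si: "ifs_ball lam t [i] = ifs_map lam t i ` cball 0 1" for i
    by (simp add: ifs_ball_def wm_Cons wm_Nil)
  define h where "h = hgap C (cball 0 1)"
  have hup: "infdist y C \<le> h" if "y \<in> cball 0 1" for y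
    unfolding h_def by (rule h_upper[OF Cne that])
  have h0: "0 \<le> h" using hup[of 0] infdist_nonneg[of 0 C] by simp
  have contr: "infdist (word_map lam t I y) C \<le> ifs_rad lam I * infdist y C"
    if "set I \<subseteq> A" for I y
  proof -
    obtain c where c: "c \<in> C" "infdist y C = dist y c"
      using infdist_attains_inf[OF compact_imp_closed[OF Cc] Cne] by metis
    have "word_map lam t I c \<in> C" by (rule wm_C[OF att that c(1)])
    hence "infdist (word_map lam t I y) C \<le> dist (word_map lam t I y) (word_map lam t I c)"
      by (rule infdist_le)
    also have "\<dots> = ifs_rad lam I * infdist y C"
    proof -
      have "0 < ifs_rad lam I" using rad_pos[of A lam I] lamA that by auto
      thus ?thesis using wm_dist[of lam t I y c] c(2) by simp
    qed
    finally show ?thesis .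
  qed
  have hI: "hgap C (ifs_ball lam t I) \<le> ifs_rad lam I * h" if "set I \<subseteq> A" for I
    unfolding hgap_def ifs_ball_def
  proof (rule cSUP_least)
    show "word_map lam t I ` cball 0 1 \<noteq> {}" by simp
    fix x assume "x \<in> word_map lam t I ` cball 0 1"
    then obtain y where y: "y \<in> cball 0 1" "x = word_map lam t I y" by blast
    have "infdist x C \<le> ifs_rad lam I * infdist y C" using contr[OF that] y by simp
    also have "\<dots> \<le> ifs_rad lam I * h"
      using hup[OF y(1)] rad_pos[of A lam I] lamA that by (simp add: mult_left_mono)
    finally show "infdist x C \<le> ifs_rad lam I * h" .
  qed
  have hI0: "0 \<le> hgap C (ifs_ball lam t I)" if "set I \<subseteq> A" for I
  proof -
    have bdd: "bdd_above ((\<lambda>x. infdist x C) ` ifs_ball lam t I)"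
    proof (rule bdd_aboveI2)
      fix x assume "x \<in> ifs_ball lam t I"
      then obtain y where y: "y \<in> cball 0 1" "x = word_map lam t I y"
        unfolding ifs_ball_def by blast
      have "infdist x C \<le> ifs_rad lam I * infdist y C" using contr[OF that] y by simp
      also have "\<dots> \<le> ifs_rad lam I * h"
        using hup[OF y(1)] rad_pos[of A lam I] lamA that by (simp add: mult_left_mono)
      finally show "infdist x C \<le> ifs_rad lam I * h" .
    qed
    have "word_map lam t I 0 \<in> ifs_ball lam t I" unfolding ifs_ball_def by simp
    thus ?thesis unfolding hgap_def using bdd
      by (intro cSUP_upper2[where x="word_map lam t I 0"]) (auto simp: infdist_nonneg)
  qed
  have P1: "ifs_ball lam t [] - (\<Union>i\<in>A. ifs_ball lam t [i]) \<noteq> {} \<longrightarrow>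
           hgap C (ifs_ball lam t []) \<le>
             (SUP x\<in>ifs_ball lam t [] - (\<Union>i\<in>A. ifs_ball lam t [i]).
                Min ((\<lambda>i. (dist x (t i) - lam i) / (1 - lam i)) ` A))"
  proof
    define U where "U = ifs_ball lam t [] - (\<Union>i\<in>A. ifs_ball lam t [i])"
    define g where "g = (\<lambda>x. Min ((\<lambda>i. (dist x (t i) - lam i) / (1 - lam i)) ` A))"
    assume "ifs_ball lam t [] - (\<Union>i\<in>A. ifs_ball lam t [i]) \<noteq> {}"
    hence Une: "U \<noteq> {}" unfolding U_def .
    have Ui: "x \<in> U \<longleftrightarrow> x \<in> cball 0 1 \<and> (\<forall>i\<in>A. x \<notin> ifs_map lam t i ` cball 0 1)" for x
      unfolding U_def S0 Si by blast
    have far: "lam i < dist x (t i)" if "x \<in> U" "i \<in> A" for x i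
    proof (rule ccontr)
      assume "\<not> lam i < dist x (t i)"
      hence le: "norm (x - t i) \<le> lam i" by (simp add: dist_norm)
      have lp: "0 < lam i" using lamA that(2) by auto
      have "norm ((1 / lam i) *\<^sub>R (x - t i)) \<le> 1"
        unfolding norm_scaleR using le lp by (simp add: field_simps del: scaleR_right_diff_distrib)
      moreover have "ifs_map lam t i ((1 / lam i) *\<^sub>R (x - t i)) = x"
        using lp by (simp add: ifs_map_def)
      ultimately have "x \<in> ifs_map lam t i ` cball 0 1" by (metis image_eqI mem_cball_0)
      thus False using Ui that by blast
    qed
    have gpos: "0 < g x" if "x \<in> U" for x
      unfolding g_def using fA neA far[OF that] lamA by (auto simp: Min_gr_iff)
    obtain i0 where i0: "i0 \<in> A" using neA by blast
    have bdd: "bdd_above (g ` U)"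
    proof (rule bdd_aboveI2)
      fix x assume x: "x \<in> U"
      have "g x \<le> (dist x (t i0) - lam i0) / (1 - lam i0)"
        unfolding g_def using fA i0 by (intro Min_le) auto
      also have "\<dots> \<le> (1 + norm (t i0)) / (1 - lam i0)"
      proof (rule divide_right_mono)
        have "norm x \<le> 1" using x Ui by auto
        moreover have "dist x (t i0) \<le> norm x + norm (t i0)"
          by (simp add: dist_norm norm_triangle_ineq4)
        ultimately show "dist x (t i0) - lam i0 \<le> 1 + norm (t i0)" using lamA i0 by force
      qed (use lamA i0 in auto)
      finally show "g x \<le> (1 + norm (t i0)) / (1 - lam i0)" .
    qed
    have Sup_ge: "g x \<le> (SUP x\<in>U. g x)" if "x \<in> U" for x
      using bdd that by (rule cSUP_upper2) simp
    obtain x0 where x0: "x0 \<in> cball 0 1" "\<forall>y\<in>cball 0 1. infdist y C \<le> infdist x0 C"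
      using continuous_attains_sup[of "cball (0::'a) 1" "\<lambda>x. infdist x C"]
      using continuous_on_infdist[OF continuous_on_id, of "cball (0::'a) 1" C] by auto
    have hx0: "h = infdist x0 C"
      using hup[OF x0(1)] x0(2) unfolding h_def hgap_def
      by (intro antisym cSUP_least) auto
    have that_h: "h \<le> (SUP x\<in>U. g x)"
    proof (cases "x0 \<in> U")
      case True
      have "\<forall>i\<in>A. h \<le> (dist x0 (t i) - lam i) / (1 - lam i)"
      proof
        fix i assume i: "i \<in> A"
        define y where "y = (1 / dist x0 (t i)) *\<^sub>R (x0 - t i)"
        have dpos: "0 < dist x0 (t i)" using far[OF True i] lamA i by force
        have y: "norm y = 1" "ifs_map lam t i y = t i + (lam i / dist x0 (t i)) *\<^sub>R (x0 - t i)"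
          using dpos by (auto simp: y_def ifs_map_def dist_norm)
        have "infdist (ifs_map lam t i y) C \<le> lam i * infdist y C"
          using contr[of "[i]" y] i by (simp add: wm_Cons wm_Nil ifs_rad_def)
        also have "\<dots> \<le> lam i * h" using hup[of y] y(1) lamA i by (simp add: mult_left_mono)
        finally have A1: "infdist (ifs_map lam t i y) C \<le> lam i * h" .
        have "dist x0 (ifs_map lam t i y) = norm ((1 - lam i / dist x0 (t i)) *\<^sub>R (x0 - t i))"
          by (simp add: y(2) dist_norm algebra_simps)
        also have "\<dots> = dist x0 (t i) - lam i"
        proof -
          have "0 \<le> 1 - lam i / dist x0 (t i)" using far[OF True i] dpos by (simp add: field_simps)
          hence "norm ((1 - lam i / dist x0 (t i)) *\<^sub>R (x0 - t i))
                = (1 - lam i / dist x0 (t i)) * dist x0 (t i)"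
            by (simp only: norm_scaleR dist_norm abs_of_nonneg)
          moreover have "(1 - lam i / dist x0 (t i)) * dist x0 (t i) = dist x0 (t i) - lam i"
            using dpos by (simp add: field_simps)
          ultimately show ?thesis by linarith
        qed
        finally have A2: "dist x0 (ifs_map lam t i y) = dist x0 (t i) - lam i" .
        have "h \<le> dist x0 (t i) - lam i + lam i * h"
          using hx0 infdist_triangle[of x0 C "ifs_map lam t i y"] A1 A2 by linarith
        hence "h * (1 - lam i) \<le> dist x0 (t i) - lam i" by (simp add: algebra_simps)
        thus "h \<le> (dist x0 (t i) - lam i) / (1 - lam i)"
          using lamA i by (simp add: pos_le_divide_eq)
      qed
      hence "h \<le> g x0" unfolding g_def using fA neA by (simp add: Min_ge_iff)
      thus ?thesis using Sup_ge[OF True] by linarith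
    next
      case False
      then obtain i y where i: "i \<in> A" and y: "y \<in> cball 0 1" "x0 = ifs_map lam t i y"
        using Ui x0(1) by blast
      have "h \<le> lam i * infdist y C"
        using contr[of "[i]" y] i hx0 y by (simp add: wm_Cons wm_Nil ifs_rad_def)
      also have "\<dots> \<le> lam i * h" using hup[OF y(1)] lamA i by (simp add: mult_left_mono)
      finally have "h * (1 - lam i) \<le> 0" by (simp add: algebra_simps)
      hence "h \<le> 0" using lamA i by (auto simp add: mult_le_0_iff)
      moreover obtain u where "u \<in> U" using Une by blast
      ultimately show ?thesis using gpos Sup_ge by force
    qed
    thus "hgap C (ifs_ball lam t []) \<le> (SUP x\<in>ifs_ball lam t [] - (\<Union>i\<in>A. ifs_ball lam t [i]).
                Min ((\<lambda>i. (dist x (t i) - lam i) / (1 - lam i)) ` A))"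
      using that_h unfolding U_def g_def S0 h_def by (simp only:)
  qed
  have hdef: "hgap C (ifs_ball lam t []) = h" unfolding S0 h_def ..
  define m where "m = Min (lam ` A)"
  have mpos: "0 < m" unfolding m_def using fA neA lamA by (auto simp: Min_gr_iff)
  have P2: "thickness A (ifs_ball lam t) (ifs_rad lam) C \<ge> ereal m / ereal h"
    unfolding thickness_def
  proof (rule INF_greatest)
    fix I assume "I \<in> {I. set I \<subseteq> A}"
    hence I: "set I \<subseteq> A" by simp
    define r where "r = ifs_rad lam I"
    have rpos: "0 < r" unfolding r_def using rad_pos[of A lam I] lamA I by auto
    define M where "M = Min ((\<lambda>i. ifs_rad lam (I @ [i])) ` A)"
    define hh where "hh = hgap C (ifs_ball lam t I)"
    have hh: "0 \<le> hh" "hh \<le> r * h" unfolding hh_def r_def using hI0[OF I] hI[OF I] by auto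
    have "\<forall>i\<in>A. r * m \<le> ifs_rad lam (I @ [i])"
    proof
      fix i assume i: "i \<in> A"
      have "m \<le> lam i" unfolding m_def using fA i by simp
      hence "r * m \<le> r * lam i" using rpos by simp
      thus "r * m \<le> ifs_rad lam (I @ [i])" by (simp add: r_def ifs_rad_def)
    qed
    hence Mge: "r * m \<le> M" unfolding M_def using fA neA by (simp add: Min_ge_iff)
    have "0 < r * m" using rpos mpos by simp
    hence Mpos: "0 < M" using Mge by linarith
    show "ereal m / ereal h \<le> ereal M / ereal hh"
    proof (cases "hh = 0")
      case True thus ?thesis using Mpos by (simp add: ereal_divide)
    next
      case False
      hence hhp: "0 < hh" using hh by simp
      have hp: "0 < h"
      proof (rule ccontr)
        assume "\<not> 0 < h" hence "r * h \<le> 0" using rpos by (simp add: mult_le_0_iff)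
        thus False using hh hhp by linarith
      qed
      have "m / h = (r * m) / (r * h)" using rpos by (simp del: mult_divide_mult_cancel_left_if)
      also have "\<dots> \<le> M / (r * h)" using Mge rpos hp by (intro divide_right_mono) auto
      also have "\<dots> \<le> M / hh" using Mpos hhp hh by (simp add: frac_le)
      finally show ?thesis using hhp hp by (simp add: ereal_divide)
    qed
  qed
  have tnorm: "norm (t i) \<le> 1 - lam i" if i: "i \<in> A" for i
  proof (cases "t i = 0")
    case True thus ?thesis using lamA i by auto
  next
    case False
    define x where "x = (1 / norm (t i)) *\<^sub>R t i"
    have "norm x = 1" using False by (simp add: x_def)
    hence "x \<in> cball 0 1" by simp
    hence "ifs_map lam t i x \<in> cball 0 1" using assms(4) i by blast
    moreover have "ifs_map lam t i x = (lam i / norm (t i) + 1) *\<^sub>R t i"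
      by (simp add: ifs_map_def x_def algebra_simps)
    moreover have "norm ((lam i / norm (t i) + 1) *\<^sub>R t i) = lam i + norm (t i)"
    proof -
      have "0 \<le> lam i / norm (t i) + 1" using lamA i by (intro add_nonneg_nonneg divide_nonneg_nonneg) auto
      hence "norm ((lam i / norm (t i) + 1) *\<^sub>R t i) = (lam i / norm (t i) + 1) * norm (t i)"
        by (simp only: norm_scaleR abs_of_nonneg)
      also have "\<dots> = lam i + norm (t i)" using False by (simp add: field_simps)
      finally show ?thesis .
    qed
    ultimately show ?thesis by simp
  qed
  have Cball: "C \<subseteq> cball 0 1"
  proof -
    obtain c where c: "c \<in> C" "\<forall>y\<in>C. norm y \<le> norm c"
      using continuous_attains_sup[OF Cc Cne continuous_on_norm[OF continuous_on_id]] by auto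
    obtain i c' where i: "i \<in> A" "c' \<in> C" "c = ifs_map lam t i c'"
      using c(1) Ceq by blast
    have lp: "0 < lam i" "lam i < 1" using lamA i(1) by auto
    have "norm c \<le> lam i * norm c' + norm (t i)"
      using i(3) norm_triangle_ineq[of "lam i *\<^sub>R c'" "t i"] lp
      by (simp add: ifs_map_def)
    also have "\<dots> \<le> lam i * norm c + (1 - lam i)"
      using c(2) i lp tnorm[OF i(1)] by (simp add: mult_left_mono add_mono)
    finally have "norm c * (1 - lam i) \<le> 1 - lam i" by (simp add: algebra_simps)
    hence "norm c \<le> 1" using lp by simp
    thus ?thesis using c(2) by auto
  qed
  have P3: "uniformly_dense A (ifs_ball lam t) (ifs_rad lam) (2 * Max (lam ` A) + h)"
    unfolding uniformly_dense_def
  proof (intro allI impI)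
    fix I y \<rho> assume I: "set I \<subseteq> A"
      and yr: "cball y \<rho> \<subseteq> ifs_ball lam t I \<and> (2 * Max (lam ` A) + h) * ifs_rad lam I \<le> \<rho>"
    define r where "r = ifs_rad lam I"
    have rpos: "0 < r" unfolding r_def using rad_pos[of A lam I] lamA I by auto
    obtain i0 where i0: "i0 \<in> A" using neA by blast
    have Mx: "lam i \<le> Max (lam ` A)" if "i \<in> A" for i using fA that by simp
    have "0 \<le> Max (lam ` A)" using Mx[OF i0] lamA i0 by force
    hence "0 \<le> (2 * Max (lam ` A) + h) * r" using h0 rpos by simp
    moreover have yr2: "(2 * Max (lam ` A) + h) * r \<le> \<rho>" using yr by (simp add: r_def)
    ultimately have rho0: "0 \<le> \<rho>" by linarith
    hence "y \<in> ifs_ball lam t I" using yr by auto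
    then obtain y' where y': "y' \<in> cball 0 1" "y = word_map lam t I y'"
      unfolding ifs_ball_def by blast
    obtain c where c: "c \<in> C" "infdist y' C = dist y' c"
      using infdist_attains_inf[OF compact_imp_closed[OF Cc] Cne] by metis
    have dyc: "dist y' c \<le> h" using hup[OF y'(1)] c(2) by simp
    obtain i c' where i: "i \<in> A" "c' \<in> C" "c = ifs_map lam t i c'"
      using c(1) Ceq by blast
    have lp: "0 < lam i" "lam i < 1" using lamA i(1) by auto
    have "dist c (t i) = lam i * norm c'"
      using i lp by (simp add: ifs_map_def dist_norm)
    also have "\<dots> \<le> lam i"
    proof -
      have "norm c' \<le> 1" using Cball i(2) by auto
      thus ?thesis using lp by (simp add: mult_left_le)
    qed
    finally have dct: "dist c (t i) \<le> lam i" .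
    have "ifs_ball lam t (I @ [i]) \<subseteq> cball y \<rho>"
    proof
      fix z assume "z \<in> ifs_ball lam t (I @ [i])"
      then obtain u where u: "u \<in> cball 0 1" "z = word_map lam t I (ifs_map lam t i u)"
        unfolding ifs_ball_def wm_snoc by auto
      have dtu: "dist (t i) (ifs_map lam t i u) \<le> lam i"
        using u(1) lp by (simp add: ifs_map_def dist_norm mult_left_le)
      have "dist y' (ifs_map lam t i u) \<le> dist y' c + dist c (t i) + dist (t i) (ifs_map lam t i u)"
        using dist_triangle[of y' "ifs_map lam t i u" c] dist_triangle[of c "ifs_map lam t i u" "t i"]
        by linarith
      also have "\<dots> \<le> 2 * Max (lam ` A) + h" using dyc dct dtu Mx[OF i(1)] by linarith
      finally have dd: "dist y' (ifs_map lam t i u) \<le> 2 * Max (lam ` A) + h" .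
      have "dist y z = r * dist y' (ifs_map lam t i u)"
        using wm_dist[of lam t I y' "ifs_map lam t i u"] rpos y'(2) u(2) r_def by simp
      also have "\<dots> \<le> r * (2 * Max (lam ` A) + h)" using dd rpos by simp
      also have "\<dots> \<le> \<rho>" using yr2 by (simp add: mult.commute)
      finally show "z \<in> cball y \<rho>" by simp
    qed
    thus "\<exists>i\<in>A. ifs_ball lam t (I @ [i]) \<subseteq> cball y \<rho>" using i(1) by blast
  qed
  show ?thesis using P1 P2 P3 unfolding hdef m_def by blast
qed

end
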